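(* Let $M\models\mathrm{AA}_0$ and $x,y\in M$. Then $x\le y$ if and only if there exists $t\in M$ such that $x+t=y$; moreover such $t$ is unique.
   Context: Structures are complete metric spaces of diameter at most $1$ in $L=\{+,\cdot,\wedge,\vee,0,1\}$ (operations $1$-Lipschitz, $d$ the only relation symbol); affine conditions use formulas built from $1$ and $d(t_1,t_2)$ via $+$, real scalar multiples, $\sup$, $\inf$, free variables universally quantified. $|x|=d(x,0)$; $x\le y$ means $x\wedge y=x$; $nx$, $x^n$ iterated sum/product. $\mathrm{AA}_0$ consists of: (A1) the identities of the nonnegative part of a lattice-ordered commutative ring with identity (commutative semiring axioms, lattice axioms, distributivity of $+,\cdot$ over $\wedge,\vee$, $0\le x$); (A2) $\inf_y d(x,(x\wedge y)+1)=1-|x|$ and $x\le x^2$; (A3) $d(x+z,y+z)=d(x,y)$; (A4) $d(y,z)\le d(xy,xz)+1-|x|$; (A5) $d(xy,xz)=d(x^ny,x^nz)\le d(y,z)$; (A6) $d(nx,ny)=d(x^n,y^n)=d(x,y)$, $n\ge1$; (A7) $|x\wedge y|+|x\vee y|=|x|+|y|$; (A8) $|xy+z|=|(x\wedge y)+z|$; (A9) $|x+y+z|=|(x\vee y)+z|$; (A10) $\inf_t d((x\wedge y)+t,y)=0$. *)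

theory Defs
  imports Complex_Main
begin

text \<open>A structure in the language L = {+, *, inf, sup, 0, 1} with metric d,
  given by its components: metric d, addition pl, multiplication ml,
  meet mn, join mx, constants z (zero) and u (one).\<close>

definition iter :: "('a \<Rightarrow> 'a \<Rightarrow> 'a) \<Rightarrow> 'a \<Rightarrow> nat \<Rightarrow> 'a" where
  "iter op x n = ((op x) ^^ (n - 1)) x"

definition aa_le :: "('a \<Rightarrow> 'a \<Rightarrow> 'a) \<Rightarrow> 'a \<Rightarrow> 'a \<Rightarrow> bool" where
  "aa_le mn x y \<longleftrightarrow> mn x y = x"

definition complete_metric_le1 :: "('a \<Rightarrow> 'a \<Rightarrow> real) \<Rightarrow> bool" where
  "complete_metric_le1 d \<longleftrightarrow>
     (\<forall>x y. d x y = 0 \<longleftrightarrow> x = y) \<and>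
     (\<forall>x y. d x y = d y x) \<and>
     (\<forall>x y w. d x w \<le> d x y + d y w) \<and>
     (\<forall>x y. d x y \<le> 1) \<and>
     (\<forall>f :: nat \<Rightarrow> 'a.
        (\<forall>e>0. \<exists>N. \<forall>m\<ge>N. \<forall>n\<ge>N. d (f m) (f n) < e) \<longrightarrow>
        (\<exists>l. \<forall>e>0. \<exists>N. \<forall>n\<ge>N. d (f n) l < e))"

definition lip1 :: "('a \<Rightarrow> 'a \<Rightarrow> real) \<Rightarrow> ('a \<Rightarrow> 'a \<Rightarrow> 'a) \<Rightarrow> bool" where
  "lip1 d op \<longleftrightarrow> (\<forall>x y x' y'. d (op x y) (op x' y') \<le> max (d x x') (d y y'))"

definition L_structure ::
  "('a \<Rightarrow> 'a \<Rightarrow> real) \<Rightarrow> ('a \<Rightarrow> 'a \<Rightarrow> 'a) \<Rightarrow> ('a \<Rightarrow> 'a \<Rightarrow> 'a) \<Rightarrow>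
   ('a \<Rightarrow> 'a \<Rightarrow> 'a) \<Rightarrow> ('a \<Rightarrow> 'a \<Rightarrow> 'a) \<Rightarrow> 'a \<Rightarrow> 'a \<Rightarrow> bool" where
  "L_structure d pl ml mn mx z u \<longleftrightarrow>
     complete_metric_le1 d \<and> lip1 d pl \<and> lip1 d ml \<and> lip1 d mn \<and> lip1 d mx"

text \<open>(A1): identities of the nonnegative part of a lattice-ordered commutative ring
  with identity: commutative semiring axioms, lattice axioms, distributivity of
  + and * over meet and join, and 0 \<le> x.\<close>
definition AA_A1 ::
  "('a \<Rightarrow> 'a \<Rightarrow> 'a) \<Rightarrow> ('a \<Rightarrow> 'a \<Rightarrow> 'a) \<Rightarrow>
   ('a \<Rightarrow> 'a \<Rightarrow> 'a) \<Rightarrow> ('a \<Rightarrow> 'a \<Rightarrow> 'a) \<Rightarrow> 'a \<Rightarrow> 'a \<Rightarrow> bool" where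
  "AA_A1 pl ml mn mx z u \<longleftrightarrow>
     \<comment> \<open>commutative semiring with 1\<close>
     (\<forall>x y w. pl (pl x y) w = pl x (pl y w)) \<and>
     (\<forall>x y. pl x y = pl y x) \<and>
     (\<forall>x. pl x z = x) \<and>
     (\<forall>x y w. ml (ml x y) w = ml x (ml y w)) \<and>
     (\<forall>x y. ml x y = ml y x) \<and>
     (\<forall>x. ml x u = x) \<and>
     (\<forall>x. ml x z = z) \<and>
     (\<forall>x y w. ml x (pl y w) = pl (ml x y) (ml x w)) \<and>
     \<comment> \<open>lattice\<close>
     (\<forall>x y w. mn (mn x y) w = mn x (mn y w)) \<and>
     (\<forall>x y. mn x y = mn y x) \<and>
     (\<forall>x. mn x x = x) \<and>
     (\<forall>x y w. mx (mx x y) w = mx x (mx y w)) \<and>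
     (\<forall>x y. mx x y = mx y x) \<and>
     (\<forall>x. mx x x = x) \<and>
     (\<forall>x y. mn x (mx x y) = x) \<and>
     (\<forall>x y. mx x (mn x y) = x) \<and>
     \<comment> \<open>distributivity of + and * over meet and join\<close>
     (\<forall>x y w. pl x (mn y w) = mn (pl x y) (pl x w)) \<and>
     (\<forall>x y w. pl x (mx y w) = mx (pl x y) (pl x w)) \<and>
     (\<forall>x y w. ml x (mn y w) = mn (ml x y) (ml x w)) \<and>
     (\<forall>x y w. ml x (mx y w) = mx (ml x y) (ml x w)) \<and>
     \<comment> \<open>0 \<le> x\<close>
     (\<forall>x. aa_le mn z x)"

definition AA0 ::
  "('a \<Rightarrow> 'a \<Rightarrow> real) \<Rightarrow> ('a \<Rightarrow> 'a \<Rightarrow> 'a) \<Rightarrow> ('a \<Rightarrow> 'a \<Rightarrow> 'a) \<Rightarrow>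
   ('a \<Rightarrow> 'a \<Rightarrow> 'a) \<Rightarrow> ('a \<Rightarrow> 'a \<Rightarrow> 'a) \<Rightarrow> 'a \<Rightarrow> 'a \<Rightarrow> bool" where
  "AA0 d pl ml mn mx z u \<longleftrightarrow>
     L_structure d pl ml mn mx z u \<and>
     \<comment> \<open>(A1)\<close>
     AA_A1 pl ml mn mx z u \<and>
     \<comment> \<open>(A2)\<close>
     (\<forall>x. (INF y. d x (pl (mn x y) u)) = 1 - d x z) \<and>
     (\<forall>x. aa_le mn x (ml x x)) \<and>
     \<comment> \<open>(A3)\<close>
     (\<forall>x y w. d (pl x w) (pl y w) = d x y) \<and>
     \<comment> \<open>(A4)\<close>
     (\<forall>x y w. d y w \<le> d (ml x y) (ml x w) + 1 - d x z) \<and>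
     \<comment> \<open>(A5)\<close>
     (\<forall>n\<ge>1. \<forall>x y w.
        d (ml x y) (ml x w) = d (ml (iter ml x n) y) (ml (iter ml x n) w) \<and>
        d (ml (iter ml x n) y) (ml (iter ml x n) w) \<le> d y w) \<and>
     \<comment> \<open>(A6)\<close>
     (\<forall>n\<ge>1. \<forall>x y.
        d (iter pl x n) (iter pl y n) = d (iter ml x n) (iter ml y n) \<and>
        d (iter ml x n) (iter ml y n) = d x y) \<and>
     \<comment> \<open>(A7)\<close>
     (\<forall>x y. d (mn x y) z + d (mx x y) z = d x z + d y z) \<and>
     \<comment> \<open>(A8)\<close>
     (\<forall>x y w. d (pl (ml x y) w) z = d (pl (mn x y) w) z) \<and>
     \<comment> \<open>(A9)\<close>
     (\<forall>x y w. d (pl (pl x y) w) z = d (pl (mx x y) w) z) \<and>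
     \<comment> \<open>(A10)\<close>
     (\<forall>x y. (INF t. d (pl (mn x y) t) y) = 0)"

end

theory Submission
  imports Defs
begin

theorem mainTheorem18:
  assumes "AA0 d pl ml mn mx z u"
  shows "(aa_le mn x y \<longleftrightarrow> (\<exists>t. pl x t = y)) \<and>
         (\<forall>t t'. pl x t = y \<longrightarrow> pl x t' = y \<longrightarrow> t = t')"
proof -
  have L: "L_structure d pl ml mn mx z u" and A1: "AA_A1 pl ml mn mx z u"
    and A3: "\<forall>x y w. d (pl x w) (pl y w) = d x y"
    and A10: "\<forall>x y. (INF t. d (pl (mn x y) t) y) = 0"
    using assms unfolding AA0_def by auto
  have cm: "complete_metric_le1 d" using L unfolding L_structure_def by auto
  have d0: "\<And>a b. d a b = 0 \<longleftrightarrow> a = b" and dsym: "\<And>a b. d a b = d b a"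
    and tri: "\<And>a b c. d a c \<le> d a b + d b c"
    and compl: "\<And>f :: nat \<Rightarrow> _. (\<forall>e>0. \<exists>N. \<forall>m\<ge>N. \<forall>n\<ge>N. d (f m) (f n) < e) \<Longrightarrow>
        (\<exists>l. \<forall>e>0. \<exists>N. \<forall>n\<ge>N. d (f n) l < e)"
    using cm unfolding complete_metric_le1_def by blast+
  have dnn: "\<And>a b. d a b \<ge> 0"
  proof -
    fix a b
    have "d a a \<le> d a b + d b a" by (rule tri)
    thus "d a b \<ge> 0" using d0[of a a] dsym[of a b] by simp
  qed
  have comm: "\<And>a b. pl a b = pl b a" using A1 by (simp add: AA_A1_def)
  have pz: "\<And>a. pl a z = a" using A1 by (simp add: AA_A1_def)
  have dist: "\<And>a b c. pl a (mn b c) = mn (pl a b) (pl a c)" using A1 by (simp add: AA_A1_def)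
  have zle: "\<And>a. mn z a = z" using A1 unfolding AA_A1_def aa_le_def by (elim conjE) (rule spec)
  have dpl: "\<And>a b c. d (pl a b) (pl a c) = d b c"
    using A3 comm by metis
  have uniq: "\<forall>t t'. pl x t = y \<longrightarrow> pl x t' = y \<longrightarrow> t = t'"
    using dpl d0 by metis
  have bwd: "aa_le mn x y" if "pl x t = y" for t
  proof -
    have "mn x y = pl x (mn z t)" using that dist[of x z t] pz[of x] by simp
    thus ?thesis unfolding aa_le_def using zle pz by simp
  qed
  have fwd: "\<exists>t. pl x t = y" if le: "aa_le mn x y"
  proof -
    have inf0: "(INF t. d (pl x t) y) = 0" using A10 le unfolding aa_le_def by metis
    have ex: "\<exists>t. d (pl x t) y < e" if "e > 0" for e :: real
    proof -
      have "Inf (range (\<lambda>t. d (pl x t) y)) < e" using inf0 that by simp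
      then obtain v where "v \<in> range (\<lambda>t. d (pl x t) y)" "v < e"
        using cInf_lessD[of "range (\<lambda>t. d (pl x t) y)" e] by blast
      thus ?thesis by auto
    qed
    define f where "f n = (SOME t. d (pl x t) y < 1 / (real n + 1))" for n
    have fn: "d (pl x (f n)) y < 1 / (real n + 1)" for n
      unfolding f_def by (rule someI_ex, rule ex, simp)
    have small: "\<exists>N::nat. 1 / (real N + 1) < e" if "e > 0" for e :: real
    proof -
      obtain N :: nat where "1 / e < real N" using reals_Archimedean2 by blast
      hence "1 / e < real N + 1" by simp
      hence "1 < (real N + 1) * e" using that by (simp add: field_simps)
      thus ?thesis using that by (intro exI[of _ N]) (simp add: field_simps)
    qed
    have mono: "1 / (real n + 1) \<le> 1 / (real N + 1)" if "n \<ge> N" for n N :: nat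
      using that by (simp add: frac_le)
    have "\<forall>e>0. \<exists>N. \<forall>m\<ge>N. \<forall>n\<ge>N. d (f m) (f n) < e"
    proof (intro allI impI)
      fix e :: real assume "e > 0"
      then obtain N where N: "1 / (real N + 1) < e / 2" using small[of "e/2"] by auto
      show "\<exists>N. \<forall>m\<ge>N. \<forall>n\<ge>N. d (f m) (f n) < e"
      proof (intro exI allI impI)
        fix m n assume "m \<ge> N" "n \<ge> N"
        have "d (f m) (f n) = d (pl x (f m)) (pl x (f n))" using dpl by simp
        also have "\<dots> \<le> d (pl x (f m)) y + d y (pl x (f n))" by (rule tri)
        also have "\<dots> < e" using fn[of m] fn[of n] dsym[of y "pl x (f n)"]
            mono[OF \<open>m \<ge> N\<close>] mono[OF \<open>n \<ge> N\<close>] N by linarith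
        finally show "d (f m) (f n) < e" .
      qed
    qed
    then obtain l where l: "\<forall>e>0. \<exists>N. \<forall>n\<ge>N. d (f n) l < e" using compl by blast
    have "d (pl x l) y < e" if "e > 0" for e :: real
    proof -
      obtain N1 where N1: "\<forall>n\<ge>N1. d (f n) l < e/2" using l \<open>e>0\<close> by (meson half_gt_zero)
      obtain N2 where N2: "1 / (real N2 + 1) < e / 2" using small[of "e/2"] \<open>e>0\<close> by auto
      define n where "n = max N1 N2"
      have "d (pl x l) y \<le> d (pl x l) (pl x (f n)) + d (pl x (f n)) y" by (rule tri)
      also have "\<dots> = d (f n) l + d (pl x (f n)) y" using dpl dsym by simp
      also have "\<dots> < e" using N1[rule_format, of n] fn[of n] mono[of N2 n] N2
        unfolding n_def by fastforce
      finally show ?thesis .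
    qed
    hence "d (pl x l) y \<le> 0"
      by (metis less_le_not_le not_le_imp_less)
    hence "pl x l = y" using dnn[of "pl x l" y] d0 by (meson antisym)
    thus ?thesis by blast
  qed
  show ?thesis using uniq bwd fwd by blast
qed

end
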